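(* Let $\mathcal{X}$ be a finite set, $\pi$ a probability mass function on $\mathcal{X}$ with full support, and $P$ a $\pi$-reversible transition matrix on $\mathcal{X}$. Let a group $\mathcal{G}$ act on $\mathcal{X}$ with orbits $\mathcal{O}_1,\dots,\mathcal{O}_k$, and let $G$ be the associated Gibbs orbit kernel. Then $\gamma(P)\ge\gamma(GPG)$. Equality holds when the maximum-achieving orbit $\mathcal{O}_i$ (in the definition of $\gamma(P)$) satisfies that $\sum_{y\notin\mathcal{O}_i}P(x,y)$ is the same for all $x\in\mathcal{O}_i$.
   Context: The Gibbs orbit kernel is $G(x,y)=\pi(y)/\pi(\mathcal{O}(x))$ if $y\in\mathcal{O}(x)$ (the orbit of $x$), and $0$ otherwise, where $\pi(A)=\sum_{z\in A}\pi(z)$. For a transition matrix $K$, $\gamma(K):=\max_{i\in\{1,\dots,k\}}\max_{x\in\mathcal{O}_i}\sum_{y\in\mathcal{X}\setminus\mathcal{O}_i}K(x,y)$. *)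

theory Defs
  imports Complex_Main "HOL-Algebra.Group_Action"
begin

text \<open>Transition matrices on a finite state space X are functions 'a => 'a => real,
  only their values on X x X matter.\<close>

definition pmf_full_support :: "'a set \<Rightarrow> ('a \<Rightarrow> real) \<Rightarrow> bool" where
  "pmf_full_support X \<pi> \<longleftrightarrow> (\<forall>x\<in>X. \<pi> x > 0) \<and> (\<Sum>x\<in>X. \<pi> x) = 1"

definition transition_matrix :: "'a set \<Rightarrow> ('a \<Rightarrow> 'a \<Rightarrow> real) \<Rightarrow> bool" where
  "transition_matrix X P \<longleftrightarrow>
     (\<forall>x\<in>X. \<forall>y\<in>X. P x y \<ge> 0) \<and> (\<forall>x\<in>X. (\<Sum>y\<in>X. P x y) = 1)"

definition reversible :: "'a set \<Rightarrow> ('a \<Rightarrow> real) \<Rightarrow> ('a \<Rightarrow> 'a \<Rightarrow> real) \<Rightarrow> bool" where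
  "reversible X \<pi> P \<longleftrightarrow> (\<forall>x\<in>X. \<forall>y\<in>X. \<pi> x * P x y = \<pi> y * P y x)"

definition matmul :: "'a set \<Rightarrow> ('a \<Rightarrow> 'a \<Rightarrow> real) \<Rightarrow> ('a \<Rightarrow> 'a \<Rightarrow> real) \<Rightarrow> 'a \<Rightarrow> 'a \<Rightarrow> real" where
  "matmul X A B x y = (\<Sum>z\<in>X. A x z * B z y)"

definition gibbs_orbit_kernel ::
  "('g, 'm) monoid_scheme \<Rightarrow> ('g \<Rightarrow> 'a \<Rightarrow> 'a) \<Rightarrow> ('a \<Rightarrow> real) \<Rightarrow> 'a \<Rightarrow> 'a \<Rightarrow> real" where
  "gibbs_orbit_kernel G \<phi> \<pi> x y =
     (if y \<in> orbit G \<phi> x then \<pi> y / (\<Sum>z\<in>orbit G \<phi> x. \<pi> z) else 0)"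

definition escape :: "'a set \<Rightarrow> ('a \<Rightarrow> 'a \<Rightarrow> real) \<Rightarrow> 'a set \<Rightarrow> 'a \<Rightarrow> real" where
  "escape X K Orb x = (\<Sum>y\<in>X - Orb. K x y)"

definition gamma ::
  "('g, 'm) monoid_scheme \<Rightarrow> 'a set \<Rightarrow> ('g \<Rightarrow> 'a \<Rightarrow> 'a) \<Rightarrow> ('a \<Rightarrow> 'a \<Rightarrow> real) \<Rightarrow> real" where
  "gamma G X \<phi> K = Max ((\<lambda>Orb. Max (escape X K Orb ` Orb)) ` orbits G X \<phi>)"

end

theory Submission
  imports Defs
begin

lemma (in group_action) orbit_sub: "x \<in> E \<Longrightarrow> orbit G \<phi> x \<subseteq> E"
  unfolding orbit_def using element_image by blast

lemma (in group_action) orbit_eq: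
  assumes "x \<in> E" "y \<in> orbit G \<phi> x"
  shows "orbit G \<phi> y = orbit G \<phi> x"
proof -
  have yE: "y \<in> E" using orbit_sub assms by blast
  have xy: "x \<in> orbit G \<phi> y" using orbit_sym assms yE by blast
  show ?thesis
  proof
    show "orbit G \<phi> y \<subseteq> orbit G \<phi> x"
    proof
      fix z assume "z \<in> orbit G \<phi> y"
      then show "z \<in> orbit G \<phi> x" using orbit_trans[of x y z] assms yE orbit_sub by blast
    qed
    show "orbit G \<phi> x \<subseteq> orbit G \<phi> y"
    proof
      fix z assume "z \<in> orbit G \<phi> x"
      then show "z \<in> orbit G \<phi> y" using orbit_trans[of y x z] xy assms yE orbit_sub by blast
    qed
  qed
qed

lemma key:
  fixes G :: "('g, 'm) monoid_scheme" and X :: "'a set" and \<phi> :: "'g \<Rightarrow> 'a \<Rightarrow> 'a"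
    and \<pi> :: "'a \<Rightarrow> real" and P :: "'a \<Rightarrow> 'a \<Rightarrow> real"
  assumes fin: "finite X"
    and pm: "pmf_full_support X \<pi>"
    and ga: "group_action G X \<phi>"
    and x0: "x0 \<in> X" and Ob_def: "Ob = orbit G \<phi> x0" and x: "x \<in> Ob"
  defines "K \<equiv> gibbs_orbit_kernel G \<phi> \<pi>"
  shows "escape X (matmul X (matmul X K P) K) Ob x =
         (\<Sum>z\<in>Ob. \<pi> z * escape X P Ob z) / (\<Sum>z\<in>Ob. \<pi> z)"
proof -
  interpret group_action G X \<phi> by (rule ga)
  have ObX: "Ob \<subseteq> X" using orbit_sub x0 Ob_def by simp
  have xX: "x \<in> X" using ObX x by blast
  have Obx: "orbit G \<phi> x = Ob" using orbit_eq x0 x Ob_def by simp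
  have row: "(\<Sum>y\<in>X - Ob. K w y) = (if w \<in> Ob then 0 else 1)" if wX: "w \<in> X" for w
  proof (cases "w \<in> Ob")
    case True
    then have "orbit G \<phi> w = Ob" using orbit_eq x0 Ob_def by simp
    then show ?thesis using True by (simp add: K_def gibbs_orbit_kernel_def)
  next
    case False
    have Obw: "orbit G \<phi> w \<subseteq> X" using orbit_sub wX by simp
    have disj: "orbit G \<phi> w \<inter> Ob = {}"
    proof (rule ccontr)
      assume "orbit G \<phi> w \<inter> Ob \<noteq> {}"
      then obtain y where y1: "y \<in> orbit G \<phi> w" and y2: "y \<in> Ob" by blast
      have "orbit G \<phi> y = orbit G \<phi> w" using orbit_eq wX y1 by simp
      moreover have "orbit G \<phi> y = Ob" using orbit_eq x0 y2 Ob_def by simp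
      ultimately show False using False orbit_refl wX by blast
    qed
    have wO: "w \<in> orbit G \<phi> w" using orbit_refl wX by simp
    have finO: "finite (orbit G \<phi> w)" using Obw fin finite_subset by blast
    have pos: "(\<Sum>z\<in>orbit G \<phi> w. \<pi> z) > 0"
      using pm Obw wO finO unfolding pmf_full_support_def
      by (meson subsetD sum_pos2 less_imp_le)
    have "(\<Sum>y\<in>X - Ob. K w y) = (\<Sum>y\<in>orbit G \<phi> w. K w y)"
      by (rule sum.mono_neutral_right) (use fin Obw disj in \<open>auto simp: K_def gibbs_orbit_kernel_def\<close>)
    also have "\<dots> = (\<Sum>y\<in>orbit G \<phi> w. \<pi> y / (\<Sum>z\<in>orbit G \<phi> w. \<pi> z))"
      by (simp add: K_def gibbs_orbit_kernel_def)
    also have "\<dots> = 1" using pos by (simp add: sum_divide_distrib[symmetric])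
    finally show ?thesis using False by simp
  qed
  have "escape X (matmul X (matmul X K P) K) Ob x =
        (\<Sum>y\<in>X - Ob. \<Sum>w\<in>X. matmul X K P x w * K w y)"
    by (simp add: escape_def matmul_def)
  also have "\<dots> = (\<Sum>w\<in>X. matmul X K P x w * (\<Sum>y\<in>X - Ob. K w y))"
    by (subst sum.swap) (simp add: sum_distrib_left)
  also have "\<dots> = (\<Sum>w\<in>X. matmul X K P x w * (if w \<in> Ob then 0 else 1))"
    using row by (intro sum.cong) auto
  also have "\<dots> = (\<Sum>w\<in>X - Ob. matmul X K P x w)"
    by (rule sum.mono_neutral_cong_right) (use fin in auto)
  also have "\<dots> = (\<Sum>z\<in>X. K x z * escape X P Ob z)"
    by (simp add: matmul_def escape_def sum_distrib_left) (rule sum.swap)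
  also have "\<dots> = (\<Sum>z\<in>Ob. K x z * escape X P Ob z)"
    by (rule sum.mono_neutral_right) (use fin ObX Obx in \<open>auto simp: K_def gibbs_orbit_kernel_def\<close>)
  also have "\<dots> = (\<Sum>z\<in>Ob. \<pi> z / (\<Sum>z\<in>Ob. \<pi> z) * escape X P Ob z)"
    using Obx by (simp add: K_def gibbs_orbit_kernel_def)
  also have "\<dots> = (\<Sum>z\<in>Ob. \<pi> z * escape X P Ob z) / (\<Sum>z\<in>Ob. \<pi> z)"
    by (simp add: sum_divide_distrib)
  finally show ?thesis .
qed


theorem proposition2p5:
  fixes G :: "('g, 'm) monoid_scheme" and X :: "'a set" and \<phi> :: "'g \<Rightarrow> 'a \<Rightarrow> 'a"
    and \<pi> :: "'a \<Rightarrow> real" and P :: "'a \<Rightarrow> 'a \<Rightarrow> real"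
  assumes "finite X" and "X \<noteq> {}"
    and "pmf_full_support X \<pi>"
    and "transition_matrix X P"
    and "reversible X \<pi> P"
    and "group_action G X \<phi>"
  defines "K \<equiv> gibbs_orbit_kernel G \<phi> \<pi>"
  shows "gamma G X \<phi> P \<ge> gamma G X \<phi> (matmul X (matmul X K P) K) \<and>
         (\<forall>Orb\<in>orbits G X \<phi>.
            (\<exists>x\<in>Orb. escape X P Orb x = gamma G X \<phi> P) \<and>
            (\<forall>x\<in>Orb. \<forall>x'\<in>Orb. escape X P Orb x = escape X P Orb x') \<longrightarrow>
            gamma G X \<phi> P = gamma G X \<phi> (matmul X (matmul X K P) K))"
proof -
  interpret group_action G X \<phi> by fact
  note fin = assms(1) and pm = assms(3)
  define M where "M = matmul X (matmul X K P) K"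
  define avg where "avg Ob = (\<Sum>z\<in>Ob. \<pi> z * escape X P Ob z) / (\<Sum>z\<in>Ob. \<pi> z)" for Ob
  have orbs: "orbits G X \<phi> = (\<lambda>x. orbit G \<phi> x) ` X" unfolding orbits_def by blast
  have finorbs: "finite (orbits G X \<phi>)" using orbs fin by simp
  have neorbs: "orbits G X \<phi> \<noteq> {}" using orbs assms(2) by simp
  have orbprops: "finite Ob \<and> Ob \<noteq> {} \<and> Ob \<subseteq> X \<and> (\<Sum>z\<in>Ob. \<pi> z) > 0"
    if ObH: "Ob \<in> orbits G X \<phi>" for Ob
  proof -
    obtain x0 where x0: "x0 \<in> X" "Ob = orbit G \<phi> x0" using ObH unfolding orbits_def by blast
    have s: "Ob \<subseteq> X" unfolding x0(2) by (rule orbit_sub[OF x0(1)])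
    have m: "x0 \<in> Ob" unfolding x0(2) by (rule orbit_refl[OF x0(1)])
    have f: "finite Ob" using s fin by (rule finite_subset)
    have "\<pi> x0 > 0" using pm x0(1) unfolding pmf_full_support_def by blast
    moreover have "\<forall>z\<in>Ob. \<pi> z \<ge> 0" using pm s unfolding pmf_full_support_def by (auto intro: less_imp_le)
    ultimately have "(\<Sum>z\<in>Ob. \<pi> z) > 0" using sum_pos2[OF f m] by blast
    then show ?thesis using s m f by blast
  qed
  have Mesc: "escape X M Ob x = avg Ob" if ObH: "Ob \<in> orbits G X \<phi>" "x \<in> Ob" for Ob x
  proof -
    obtain x0 where x0: "x0 \<in> X" "Ob = orbit G \<phi> x0" using ObH(1) unfolding orbits_def by blast
    show ?thesis unfolding M_def avg_def K_def
      by (rule key[OF fin pm assms(6) x0 ObH(2)])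
  qed
  have MaxM: "Max (escape X M Ob ` Ob) = avg Ob" if "Ob \<in> orbits G X \<phi>" for Ob
  proof -
    have "escape X M Ob ` Ob = {avg Ob}" using Mesc[OF that] orbprops[OF that] by auto
    then show ?thesis by simp
  qed
  have gM: "gamma G X \<phi> M = Max (avg ` orbits G X \<phi>)"
    unfolding gamma_def using MaxM by (simp cong: image_cong)
  have avg_le: "avg Ob \<le> Max (escape X P Ob ` Ob)" if Ob: "Ob \<in> orbits G X \<phi>" for Ob
  proof -
    let ?m = "Max (escape X P Ob ` Ob)"
    have pr: "finite Ob" "Ob \<noteq> {}" "Ob \<subseteq> X" "(\<Sum>z\<in>Ob. \<pi> z) > 0" using orbprops[OF Ob] by auto
    have "(\<Sum>z\<in>Ob. \<pi> z * escape X P Ob z) \<le> (\<Sum>z\<in>Ob. \<pi> z * ?m)"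
    proof (rule sum_mono)
      fix z assume z: "z \<in> Ob"
      have "\<pi> z > 0" using pm z pr(3) unfolding pmf_full_support_def by blast
      moreover have "escape X P Ob z \<le> ?m" using z pr by simp
      ultimately show "\<pi> z * escape X P Ob z \<le> \<pi> z * ?m" by simp
    qed
    also have "\<dots> = ?m * (\<Sum>z\<in>Ob. \<pi> z)"
      by (rule sum_distrib_right[symmetric, THEN trans]) (rule mult.commute)
    finally show ?thesis unfolding avg_def using pos_divide_le_eq[OF pr(4)] by blast
  qed
  have part1: "gamma G X \<phi> M \<le> gamma G X \<phi> P"
    unfolding gM
  proof (rule Max.boundedI)
    show "finite (avg ` orbits G X \<phi>)" using finorbs by simp
    show "avg ` orbits G X \<phi> \<noteq> {}" using neorbs by simp
    fix a assume "a \<in> avg ` orbits G X \<phi>"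
    then obtain Ob where Ob: "Ob \<in> orbits G X \<phi>" "a = avg Ob" by blast
    have "Max (escape X P Ob ` Ob) \<le> gamma G X \<phi> P"
      unfolding gamma_def using finorbs Ob(1) by (intro Max_ge) auto
    then show "a \<le> gamma G X \<phi> P" using avg_le[OF Ob(1)] Ob(2) by simp
  qed
  have part2: "gamma G X \<phi> P = gamma G X \<phi> M"
    if Ob: "Ob \<in> orbits G X \<phi>" and ex: "\<exists>x\<in>Ob. escape X P Ob x = gamma G X \<phi> P"
      and const: "\<forall>x\<in>Ob. \<forall>x'\<in>Ob. escape X P Ob x = escape X P Ob x'" for Ob
  proof -
    obtain x0 where x0: "x0 \<in> Ob" "escape X P Ob x0 = gamma G X \<phi> P" using ex by blast
    have pr: "finite Ob" "Ob \<noteq> {}" "Ob \<subseteq> X" "(\<Sum>z\<in>Ob. \<pi> z) > 0" using orbprops[OF Ob] by auto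
    have "(\<Sum>z\<in>Ob. \<pi> z * escape X P Ob z) = (\<Sum>z\<in>Ob. \<pi> z * gamma G X \<phi> P)"
    proof (rule sum.cong)
      fix z assume "z \<in> Ob"
      then have "escape X P Ob z = escape X P Ob x0" using const x0(1) by blast
      then show "\<pi> z * escape X P Ob z = \<pi> z * gamma G X \<phi> P" using x0(2) by simp
    qed simp
    also have "\<dots> = gamma G X \<phi> P * (\<Sum>z\<in>Ob. \<pi> z)"
      by (rule sum_distrib_right[symmetric, THEN trans]) (rule mult.commute)
    finally have "avg Ob = gamma G X \<phi> P" unfolding avg_def using pr(4) by (simp add: divide_eq_eq)
    moreover have "avg Ob \<le> gamma G X \<phi> M" unfolding gM using finorbs Ob by (intro Max_ge) auto
    ultimately show ?thesis using part1 by linarith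
  qed
  show ?thesis unfolding M_def[symmetric] using part1 part2 by blast
qed

end
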